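(* Let $P=\Bbbk[x_1,x_2,x_3]$ with Poisson bracket $\{x_1,x_2\}=0$, $\{x_2,x_3\}=2x_1x_2$, $\{x_3,x_1\}=x_1^2$. Then \[ \mathrm{PAut}_{\mathrm{gr}}(P)=\left\{\begin{bmatrix}a&0&0\\0&b&0\\c&d&a\end{bmatrix}: a,b\in\Bbbk^\times,\ c,d\in\Bbbk\right\},\qquad \mathrm{PR}(P)=\left\{\begin{bmatrix}1&0&0\\0&\xi&0\\0&d&1\end{bmatrix}: \xi\neq1 \text{ a root of unity},\ d\in\Bbbk\right\}. \]
   Context: $\Bbbk$ is algebraically closed of characteristic $0$; $P$ has the standard grading. A graded Poisson automorphism $\phi$ (degree-preserving bijective algebra and Lie homomorphism) is identified with the matrix $[a_{ij}]$ where $\phi(x_i)=\sum_k a_{ik}x_k$. $\mathrm{PR}(P)$ is the set of Poisson reflections: finite-order graded Poisson automorphisms $\phi$ with $\phi|_{P_1}$ having eigenvalues $1,1,\xi$ for a primitive root of unity $\xi\neq1$. *)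

theory Defs
  imports "HOL-Analysis.Analysis" "HOL-Library.Poly_Mapping"
    "HOL-Computational_Algebra.Polynomial"
begin

text \<open>The polynomial ring P = k[x1,x2,x3]: variables are indexed by the
three-element type 3, whose elements 1, 2, 3 (=0) stand for x1, x2, x3.\<close>

type_synonym 'k P3 = "(3 \<Rightarrow>\<^sub>0 nat) \<Rightarrow>\<^sub>0 'k"

definition var :: "3 \<Rightarrow> 'k::comm_ring_1 P3" where
  "var i = Poly_Mapping.single (Poly_Mapping.single i 1) 1"

definition const :: "'k::comm_ring_1 \<Rightarrow> 'k P3" where
  "const c = Poly_Mapping.single 0 c"

definition subst :: "(3 \<Rightarrow> 'k::comm_ring_1 P3) \<Rightarrow> 'k P3 \<Rightarrow> 'k P3" where
  "subst \<sigma> p = (\<Sum>m\<in>Poly_Mapping.keys p. const (Poly_Mapping.lookup p m) * (\<Prod>i\<in>UNIV. \<sigma> i ^ Poly_Mapping.lookup m i))"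

definition pdiff :: "3 \<Rightarrow> 'k::comm_ring_1 P3 \<Rightarrow> 'k P3" where
  "pdiff i p = (\<Sum>m\<in>Poly_Mapping.keys p.
      Poly_Mapping.single (m - Poly_Mapping.single i 1) (of_nat (Poly_Mapping.lookup m i) * Poly_Mapping.lookup p m))"

definition gbr :: "3 \<Rightarrow> 3 \<Rightarrow> 'k::comm_ring_1 P3" where
  "gbr i j =
    (if i = 2 \<and> j = 3 then 2 * var 1 * var 2
     else if i = 3 \<and> j = 2 then - (2 * var 1 * var 2)
     else if i = 3 \<and> j = 1 then var 1 ^ 2
     else if i = 1 \<and> j = 3 then - (var 1 ^ 2)
     else 0)"

definition pbr :: "'k::comm_ring_1 P3 \<Rightarrow> 'k P3 \<Rightarrow> 'k P3" where
  "pbr f g = (\<Sum>i\<in>UNIV. \<Sum>j\<in>UNIV. pdiff i f * pdiff j g * gbr i j)"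

definition phi :: "'k::comm_ring_1 ^3^3 \<Rightarrow> 'k P3 \<Rightarrow> 'k P3" where
  "phi A = subst (\<lambda>i. \<Sum>k\<in>UNIV. const (A $ i $ k) * var k)"

definition PAut_gr :: "('k::comm_ring_1 ^3^3) set" where
  "PAut_gr = {A. bij (phi A) \<and> (\<forall>f g. phi A (pbr f g) = pbr (phi A f) (phi A g))}"

definition charpoly3 :: "'k::comm_ring_1 ^3^3 \<Rightarrow> 'k poly" where
  "charpoly3 A = det (\<chi> i j. (if i = j then [:0, 1:] else 0) - [:A $ i $ j:])"

definition root_of_unity :: "'k::comm_ring_1 \<Rightarrow> bool" where
  "root_of_unity z \<longleftrightarrow> (\<exists>n>0. z ^ n = 1)"

definition PR :: "('k::comm_ring_1 ^3^3) set" where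
  "PR = {A. A \<in> PAut_gr \<and> (\<exists>n>0. (phi A ^^ n) = id) \<and>
           (\<exists>\<xi>. root_of_unity \<xi> \<and> \<xi> \<noteq> 1 \<and>
                charpoly3 A = [:-1, 1:] ^ 2 * [:-\<xi>, 1:])}"

definition mat3 :: "'k::zero \<Rightarrow> 'k \<Rightarrow> 'k \<Rightarrow> 'k \<Rightarrow> 'k \<Rightarrow> 'k \<Rightarrow> 'k \<Rightarrow> 'k \<Rightarrow> 'k \<Rightarrow> 'k^3^3" where
  "mat3 a11 a12 a13 a21 a22 a23 a31 a32 a33 =
     (\<chi> i j. if i = 1 then (if j = 1 then a11 else if j = 2 then a12 else a13)
             else if i = 2 then (if j = 1 then a21 else if j = 2 then a22 else a23)
             else (if j = 1 then a31 else if j = 2 then a32 else a33))"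

end

theory Submission
  imports Defs
begin

abbreviation dl :: "3 \<Rightarrow> (3 \<Rightarrow>\<^sub>0 nat)" where
  "dl i \<equiv> Poly_Mapping.single i 1"

definition Mon :: "(3 \<Rightarrow> 'k::comm_ring_1 P3) \<Rightarrow> (3 \<Rightarrow>\<^sub>0 nat) \<Rightarrow> 'k P3" where
  "Mon \<sigma> m = (\<Prod>i\<in>UNIV. \<sigma> i ^ Poly_Mapping.lookup m i)"

lemma Mon_add: "Mon \<sigma> (m + n) = Mon \<sigma> m * Mon \<sigma> n"
  by (simp add: Mon_def lookup_add power_add prod.distrib)

lemma Mon_0: "Mon \<sigma> 0 = 1"
  by (simp add: Mon_def)

lemma Mon_dl: "Mon \<sigma> (dl i) = \<sigma> i"
proof -
  have "Mon \<sigma> (dl i) = (\<Prod>j\<in>UNIV. if j = i then \<sigma> i else 1)"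
    unfolding Mon_def by (intro prod.cong) (auto simp: lookup_single when_def)
  also have "\<dots> = \<sigma> i" by (simp add: prod.delta)
  finally show ?thesis .
qed

lemma const_0[simp]: "const 0 = 0" by (simp add: const_def)
lemma const_1[simp]: "const 1 = 1" by (simp add: const_def)
lemma const_add: "const (a + b) = const a + const b" by (simp add: const_def single_add)
lemma const_mult: "const (a * b) = const a * const b" by (simp add: const_def mult_single)
lemma const_uminus: "const (- a) = - const a" by (simp add: const_def single_uminus)
lemma const_diff: "const (a - b) = const a - const b" by (simp add: const_def single_diff)
lemma const_sum: "const (sum f S) = (\<Sum>x\<in>S. const (f x))"
  by (induction S rule: infinite_finite_induct) (auto simp: const_add)
lemma const_of_nat: "const (of_nat n) = of_nat n" by (simp add: const_def)
lemma const_numeral: "const (numeral n) = numeral n" by (simp add: const_def)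

lemma expansion: "p = (\<Sum>m\<in>Poly_Mapping.keys p. Poly_Mapping.single m (Poly_Mapping.lookup p m))"
proof (rule poly_mapping_eqI)
  fix k
  show "Poly_Mapping.lookup p k = Poly_Mapping.lookup (\<Sum>m\<in>Poly_Mapping.keys p. Poly_Mapping.single m (Poly_Mapping.lookup p m)) k"
    by (simp add: lookup_sum lookup_single when_def in_keys_iff)
qed

lemma subst_superset:
  assumes "finite S" "Poly_Mapping.keys p \<subseteq> S"
  shows "subst \<sigma> p = (\<Sum>m\<in>S. const (Poly_Mapping.lookup p m) * Mon \<sigma> m)"
  unfolding subst_def Mon_def
  by (rule sum.mono_neutral_left) (use assms in \<open>auto simp: in_keys_iff\<close>)

lemma subst_add: "subst \<sigma> (p + q) = subst \<sigma> p + subst \<sigma> q"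
proof -
  let ?S = "Poly_Mapping.keys p \<union> Poly_Mapping.keys q"
  have "Poly_Mapping.keys (p + q) \<subseteq> ?S" by (rule keys_add)
  then have "subst \<sigma> (p + q) = (\<Sum>m\<in>?S. const (Poly_Mapping.lookup (p+q) m) * Mon \<sigma> m)"
    by (intro subst_superset) auto
  also have "\<dots> = (\<Sum>m\<in>?S. const (Poly_Mapping.lookup p m) * Mon \<sigma> m) + (\<Sum>m\<in>?S. const (Poly_Mapping.lookup q m) * Mon \<sigma> m)"
    by (simp add: lookup_add const_add distrib_right sum.distrib)
  also have "\<dots> = subst \<sigma> p + subst \<sigma> q"
    by (simp add: subst_superset[of ?S p] subst_superset[of ?S q])
  finally show ?thesis .
qed

lemma additive_sum:
  fixes F :: "'a::ab_group_add \<Rightarrow> 'b::ab_group_add"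
  assumes "\<And>x y. F (x + y) = F x + F y"
  shows "F (sum g S) = (\<Sum>x\<in>S. F (g x))"
proof -
  have F0: "F 0 = 0" using assms[of 0 0] by simp
  show ?thesis
    by (induction S rule: infinite_finite_induct) (auto simp: F0 assms)
qed

lemma subst_0[simp]: "subst \<sigma> 0 = 0" by (simp add: subst_def)

lemma subst_sum: "subst \<sigma> (sum g S) = (\<Sum>x\<in>S. subst \<sigma> (g x))"
  by (rule additive_sum) (rule subst_add)

lemma subst_single: "subst \<sigma> (Poly_Mapping.single m a) = const a * Mon \<sigma> m"
  by (subst subst_superset[of "{m}"]) (auto simp: lookup_single)

lemma subst_mult: "subst \<sigma> (p * q) = subst \<sigma> p * subst \<sigma> q"
proof -
  let ?P = "Poly_Mapping.keys p" and ?Q = "Poly_Mapping.keys q"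
  have "p * q = (\<Sum>m\<in>?P. \<Sum>n\<in>?Q. Poly_Mapping.single m (Poly_Mapping.lookup p m) * Poly_Mapping.single n (Poly_Mapping.lookup q n))"
    by (subst expansion[of p], subst expansion[of q]) (simp add: sum_distrib_left sum_distrib_right sum.swap[of _ "Poly_Mapping.keys q"])
  then have "subst \<sigma> (p * q) = (\<Sum>m\<in>?P. \<Sum>n\<in>?Q. subst \<sigma> (Poly_Mapping.single m (Poly_Mapping.lookup p m)) * subst \<sigma> (Poly_Mapping.single n (Poly_Mapping.lookup q n)))"
    by (simp add: subst_sum mult_single subst_single const_mult Mon_add mult_ac)
  also have "\<dots> = subst \<sigma> (\<Sum>m\<in>?P. Poly_Mapping.single m (Poly_Mapping.lookup p m)) * subst \<sigma> (\<Sum>n\<in>?Q. Poly_Mapping.single n (Poly_Mapping.lookup q n))"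
    by (simp add: subst_sum sum_distrib_left sum_distrib_right sum.swap[of _ "Poly_Mapping.keys q"])
  finally show ?thesis by (simp only: expansion[symmetric])
qed

lemma subst_const: "subst \<sigma> (const c) = const c"
  using subst_single[of \<sigma> 0 c] by (simp add: Mon_0 const_def)

lemma subst_var: "subst \<sigma> (var i) = \<sigma> i"
  unfolding var_def by (simp only: subst_single Mon_dl const_1 mult_1)

lemma subst_1: "subst \<sigma> 1 = 1"
  using subst_const[of \<sigma> 1] by simp

lemma subst_uminus: "subst \<sigma> (- p) = - subst \<sigma> p"
  using subst_add[of \<sigma> p "-p"] by (simp add: eq_neg_iff_add_eq_0 add.commute)

lemma subst_diff: "subst \<sigma> (p - q) = subst \<sigma> p - subst \<sigma> q"
  using subst_add[of \<sigma> p "-q"] by (simp add: subst_uminus)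

lemma subst_power: "subst \<sigma> (p ^ n) = subst \<sigma> p ^ n"
  by (induction n) (simp_all add: subst_1 subst_mult)

lemma subst_of_nat: "subst \<sigma> (of_nat n) = of_nat n"
  using subst_const[of \<sigma> "of_nat n"] by (simp add: const_of_nat)

lemma subst_numeral: "subst \<sigma> (numeral n) = numeral n"
  using subst_const[of \<sigma> "numeral n"] by (simp add: const_numeral)

lemma pdiff_superset:
  assumes "finite S" "Poly_Mapping.keys p \<subseteq> S"
  shows "pdiff i p = (\<Sum>m\<in>S. Poly_Mapping.single (m - dl i) (of_nat (Poly_Mapping.lookup m i) * Poly_Mapping.lookup p m))"
  unfolding pdiff_def
  by (rule sum.mono_neutral_left) (use assms in \<open>auto simp: in_keys_iff\<close>)

lemma pdiff_add: "pdiff i (p + q) = pdiff i p + pdiff i q"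
proof -
  let ?S = "Poly_Mapping.keys p \<union> Poly_Mapping.keys q"
  have "Poly_Mapping.keys (p + q) \<subseteq> ?S" by (rule keys_add)
  then have "pdiff i (p + q) = (\<Sum>m\<in>?S. Poly_Mapping.single (m - dl i) (of_nat (Poly_Mapping.lookup m i) * Poly_Mapping.lookup (p+q) m))"
    by (intro pdiff_superset) auto
  also have "\<dots> = (\<Sum>m\<in>?S. Poly_Mapping.single (m - dl i) (of_nat (Poly_Mapping.lookup m i) * Poly_Mapping.lookup p m))
      + (\<Sum>m\<in>?S. Poly_Mapping.single (m - dl i) (of_nat (Poly_Mapping.lookup m i) * Poly_Mapping.lookup q m))"
    by (simp add: lookup_add distrib_left single_add sum.distrib)
  also have "\<dots> = pdiff i p + pdiff i q"
    by (simp add: pdiff_superset[of ?S p] pdiff_superset[of ?S q])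
  finally show ?thesis .
qed

lemma pdiff_0[simp]: "pdiff i 0 = 0" by (simp add: pdiff_def)

lemma pdiff_sum: "pdiff i (sum g S) = (\<Sum>x\<in>S. pdiff i (g x))"
  by (rule additive_sum) (rule pdiff_add)

lemma pdiff_single: "pdiff i (Poly_Mapping.single m a) = Poly_Mapping.single (m - dl i) (of_nat (Poly_Mapping.lookup m i) * a)"
  by (subst pdiff_superset[of "{m}"]) (auto simp: lookup_single)

lemma pdiff_aux:
  fixes a b :: "'k::comm_ring_1"
  shows "Poly_Mapping.single m a * Poly_Mapping.single (n - dl i) (of_nat (Poly_Mapping.lookup n i) * b)
   = Poly_Mapping.single (m + n - dl i) (of_nat (Poly_Mapping.lookup n i) * (a * b))"
proof (cases "Poly_Mapping.lookup n i = 0")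
  case True then show ?thesis by simp
next
  case False
  have "m + (n - dl i) = m + n - dl i"
    by (rule poly_mapping_eqI) (use False in \<open>auto simp: lookup_add lookup_minus lookup_single when_def\<close>)
  then show ?thesis by (simp add: mult_single mult_ac)
qed

lemma pdiff_single_mult:
  fixes a b :: "'k::comm_ring_1"
  shows "pdiff i (Poly_Mapping.single m a * Poly_Mapping.single n b) =
    Poly_Mapping.single m a * pdiff i (Poly_Mapping.single n b) + Poly_Mapping.single n b * pdiff i (Poly_Mapping.single m a)"
  unfolding pdiff_single pdiff_aux
  by (simp add: mult_single pdiff_single lookup_add single_add[symmetric] add.commute[of n m] algebra_simps
      mult.commute[of b a] distrib_right)

lemma pdiff_mult: "pdiff i (p * q) = p * pdiff i q + q * pdiff i p"
proof -
  let ?P = "Poly_Mapping.keys p" and ?Q = "Poly_Mapping.keys q"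
  let ?p = "\<lambda>m. Poly_Mapping.single m (Poly_Mapping.lookup p m)"
  let ?q = "\<lambda>n. Poly_Mapping.single n (Poly_Mapping.lookup q n)"
  have "p * q = (\<Sum>m\<in>?P. \<Sum>n\<in>?Q. ?p m * ?q n)"
    by (subst expansion[of p], subst expansion[of q]) (simp add: sum_distrib_left sum_distrib_right sum.swap[of _ "Poly_Mapping.keys q"])
  then have "pdiff i (p * q) = (\<Sum>m\<in>?P. \<Sum>n\<in>?Q. ?p m * pdiff i (?q n) + ?q n * pdiff i (?p m))"
    by (simp add: pdiff_sum pdiff_single_mult)
  also have "\<dots> = (\<Sum>m\<in>?P. ?p m) * pdiff i (\<Sum>n\<in>?Q. ?q n) + (\<Sum>n\<in>?Q. ?q n) * pdiff i (\<Sum>m\<in>?P. ?p m)"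
    by (simp add: pdiff_sum sum_distrib_left sum_distrib_right sum.distrib sum.swap[of _ "Poly_Mapping.keys q"])
  finally show ?thesis by (simp only: expansion[symmetric])
qed

lemma pdiff_const[simp]: "pdiff i (const c) = 0"
  by (simp add: const_def pdiff_single)

lemma pdiff_1[simp]: "pdiff i 1 = 0"
  using pdiff_const[of i 1] by simp

lemma pdiff_var: "pdiff i (var j) = (if i = j then 1 else 0)"
  by (auto simp: var_def pdiff_single lookup_single when_def)

lemma pdiff_cmult: "pdiff i (const c * p) = const c * pdiff i p"
  by (simp add: pdiff_mult)

lemma pdiff_uminus: "pdiff i (- p) = - pdiff i p"
  using pdiff_add[of i p "-p"] by (simp add: eq_neg_iff_add_eq_0 add.commute)

lemma pdiff_diff: "pdiff i (p - q) = pdiff i p - pdiff i q"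
  using pdiff_add[of i p "-q"] by (simp add: pdiff_uminus)

lemma var_power: "(var i :: 'k::comm_ring_1 P3) ^ n = Poly_Mapping.single (Poly_Mapping.single i n) 1"
proof (induction n)
  case 0 then show ?case by simp
next
  case (Suc n)
  then show ?case
    by (simp add: var_def mult_single single_add[symmetric])
qed

lemma prod_singles: "(\<Prod>i\<in>S. Poly_Mapping.single (f i) (1::'k::comm_ring_1)) = Poly_Mapping.single (sum f S) 1"
  by (induction S rule: infinite_finite_induct) (auto simp: mult_single)

lemma sum_dl: "(\<Sum>i\<in>UNIV. Poly_Mapping.single i (Poly_Mapping.lookup m i)) = (m :: 3 \<Rightarrow>\<^sub>0 nat)"
  by (rule poly_mapping_eqI) (simp add: lookup_sum lookup_single when_def)

lemma Mon_var: "Mon var m = (Poly_Mapping.single m 1 :: 'k::comm_ring_1 P3)"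
  unfolding Mon_def var_power prod_singles sum_dl ..

lemma single_Mon: "Poly_Mapping.single m a = const a * Mon var m"
  by (simp add: Mon_var const_def mult_single)

lemma poly_induct:
  fixes p :: "'k::comm_ring_1 P3"
  assumes C: "\<And>c. Q (const c)" and V: "\<And>i. Q (var i)"
    and A: "\<And>p q. Q p \<Longrightarrow> Q q \<Longrightarrow> Q (p + q)"
    and M: "\<And>p q. Q p \<Longrightarrow> Q q \<Longrightarrow> Q (p * q)"
  shows "Q p"
proof -
  have Q1: "Q 1" using C[of 1] by simp
  have Q0: "Q 0" using C[of 0] by simp
  have pw: "Q (var i ^ n)" for i n
    by (induction n) (auto simp: Q1 V M)
  have pr: "Q (\<Prod>i\<in>S. var i ^ f i)" for S and f :: "3 \<Rightarrow> nat"
    by (induction S rule: infinite_finite_induct) (auto simp: Q1 pw M)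
  have mon: "Q (Poly_Mapping.single m a)" for m a
    unfolding single_Mon Mon_def by (rule M[OF C pr])
  have "Q (\<Sum>m\<in>S. Poly_Mapping.single m (Poly_Mapping.lookup p m))" for S
    by (induction S rule: infinite_finite_induct) (auto simp: Q0 mon A)
  then show ?thesis by (subst expansion) 
qed

lemma subst_var_id: "subst var p = p"
  by (induction p rule: poly_induct) (auto simp: subst_const subst_var subst_add subst_mult)

lemma cases3: fixes x :: 3 obtains "x = 1" | "x = 2" | "x = 3" using exhaust_3 by blast

lemma gbr_anti: "gbr j i = - gbr i j"
  unfolding gbr_def by (cases i rule: cases3; cases j rule: cases3) simp_all

lemma pbr_add1: "pbr (p + q) g = pbr p g + pbr q g"
  by (simp add: pbr_def pdiff_add distrib_right sum.distrib)

lemma pbr_mult1: "pbr (p * q) g = p * pbr q g + q * pbr p g"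
proof -
  have "\<And>i j. pdiff i (p*q) * pdiff j g * gbr i j = p * (pdiff i q * pdiff j g * gbr i j) + q * (pdiff i p * pdiff j g * gbr i j)"
    by (simp add: pdiff_mult algebra_simps)
  then show ?thesis
    unfolding pbr_def by (simp only: sum.distrib sum_distrib_left[symmetric])
qed

lemma pbr_const1: "pbr (const c) g = 0"
  by (simp add: pbr_def)

lemma pbr_anti: "pbr g f = - pbr f g"
proof -
  have "pbr g f = (\<Sum>j\<in>UNIV. \<Sum>i\<in>UNIV. pdiff i g * pdiff j f * gbr i j)"
    unfolding pbr_def by (rule sum.swap)
  also have "\<dots> = - pbr f g"
  proof -
    have t: "pdiff i g * pdiff j f * gbr i j = - (pdiff j f * pdiff i g * gbr j i)" for i j
      by (simp add: gbr_anti[of j i])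
    show ?thesis unfolding pbr_def t by (simp add: sum_negf)
  qed
  finally show ?thesis .
qed

lemma subst_subst: "subst \<tau> (subst \<sigma> p) = subst (\<lambda>i. subst \<tau> (\<sigma> i)) p"
  by (induction p rule: poly_induct) (auto simp: subst_const subst_var subst_add subst_mult)

lemma phi_add: "phi A (p + q) = phi A p + phi A q" by (simp add: phi_def subst_add)
lemma phi_mult: "phi A (p * q) = phi A p * phi A q" by (simp add: phi_def subst_mult)
lemma phi_const: "phi A (const c) = const c" by (simp add: phi_def subst_const)
lemma phi_var: "phi A (var i) = (\<Sum>k\<in>UNIV. const (A $ i $ k) * var k)" by (simp add: phi_def subst_var)
lemma phi_uminus: "phi A (- p) = - phi A p" by (simp add: phi_def subst_uminus)
lemma phi_0: "phi A 0 = 0" by (simp add: phi_def)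

lemma phi_comp: "phi A (phi B p) = phi (B ** A) p"
proof -
  have "phi A (phi B p) = subst (\<lambda>i. phi A (\<Sum>k\<in>UNIV. const (B $ i $ k) * var k)) p"
    by (simp add: phi_def subst_subst)
  also have "(\<lambda>i. phi A (\<Sum>k\<in>UNIV. const (B $ i $ k) * var k)) = (\<lambda>i. \<Sum>l\<in>UNIV. const ((B ** A) $ i $ l) * var l)"
  proof
    fix i
    have "phi A (\<Sum>k\<in>UNIV. const (B $ i $ k) * var k) = (\<Sum>k\<in>UNIV. const (B $ i $ k) * (\<Sum>l\<in>UNIV. const (A $ k $ l) * var l))"
      unfolding phi_def by (simp add: subst_sum subst_mult subst_const subst_var)
    also have "\<dots> = (\<Sum>k\<in>UNIV. \<Sum>l\<in>UNIV. const (B $ i $ k * A $ k $ l) * var l)"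
      by (simp add: sum_distrib_left const_mult mult.assoc)
    also have "\<dots> = (\<Sum>l\<in>UNIV. \<Sum>k\<in>UNIV. const (B $ i $ k * A $ k $ l) * var l)"
      by (rule sum.swap)
    also have "\<dots> = (\<Sum>l\<in>UNIV. const ((B ** A) $ i $ l) * var l)"
      by (simp add: matrix_matrix_mult_def const_sum sum_distrib_right)
    finally show "phi A (\<Sum>k\<in>UNIV. const (B $ i $ k) * var k) = (\<Sum>l\<in>UNIV. const ((B ** A) $ i $ l) * var l)" .
  qed
  finally show ?thesis by (simp add: phi_def)
qed

lemma phi_id:
  fixes p :: "'k::comm_ring_1 P3"
  shows "phi (mat 1) p = p"
proof -
  have "(\<lambda>i. \<Sum>k\<in>UNIV. const (mat 1 $ i $ k) * var k) = (var :: 3 \<Rightarrow> 'k::comm_ring_1 P3)"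
  proof
    fix i
    have "\<And>k. const (mat 1 $ i $ k) * var k = (if i = k then var i else (0::'k P3))"
      by (simp add: mat_def)
    then show "(\<Sum>k\<in>UNIV. const (mat 1 $ i $ k) * var k) = (var i :: 'k P3)"
      by (simp add: sum.delta)
  qed
  then show ?thesis by (simp add: phi_def subst_var_id)
qed

lemma hom_gen:
  assumes base: "\<And>i j. phi A (pbr (var i) (var j)) = pbr (phi A (var i)) (phi A (var j))"
  shows "phi A (pbr f g) = pbr (phi A f) (phi A g)"
proof -
  have ext: "phi A (pbr f g) = pbr (phi A f) (phi A g)"
    if hg: "\<And>i. phi A (pbr (var i) g) = pbr (phi A (var i)) (phi A g)" for f g
  proof (induction f rule: poly_induct)
    case (1 c) then show ?case by (simp add: pbr_const1 phi_const phi_0)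
  next
    case (2 i) then show ?case by (rule hg)
  next
    case (3 p q) then show ?case by (simp add: pbr_add1 phi_add)
  next
    case (4 p q) then show ?case by (simp add: pbr_mult1 phi_add phi_mult)
  qed
  have "phi A (pbr f (var j)) = pbr (phi A f) (phi A (var j))" for f j
    by (rule ext) (rule base)
  then have "phi A (pbr (var j) f) = pbr (phi A (var j)) (phi A f)" for f j
    by (metis pbr_anti phi_uminus)
  then show ?thesis by (rule ext)
qed



lemma mat3_entries:
  "mat3 a11 a12 a13 a21 a22 a23 a31 a32 a33 $ 1 $ 1 = a11"
  "mat3 a11 a12 a13 a21 a22 a23 a31 a32 a33 $ 1 $ 2 = a12"
  "mat3 a11 a12 a13 a21 a22 a23 a31 a32 a33 $ 1 $ 3 = a13"
  "mat3 a11 a12 a13 a21 a22 a23 a31 a32 a33 $ 2 $ 1 = a21"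
  "mat3 a11 a12 a13 a21 a22 a23 a31 a32 a33 $ 2 $ 2 = a22"
  "mat3 a11 a12 a13 a21 a22 a23 a31 a32 a33 $ 2 $ 3 = a23"
  "mat3 a11 a12 a13 a21 a22 a23 a31 a32 a33 $ 3 $ 1 = a31"
  "mat3 a11 a12 a13 a21 a22 a23 a31 a32 a33 $ 3 $ 2 = a32"
  "mat3 a11 a12 a13 a21 a22 a23 a31 a32 a33 $ 3 $ 3 = a33"
  by (simp_all add: mat3_def)

lemma gbr_alt: "gbr i j =
   const (if i = 2 \<and> j = 3 then 2 else if i = 3 \<and> j = 2 then -2 else 0) * (var 1 * var 2)
 + const (if i = 3 \<and> j = 1 then 1 else if i = 1 \<and> j = 3 then -1 else 0) * (var 1 * var 1)"
  by (cases i rule: cases3; cases j rule: cases3)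
     (simp_all add: gbr_def const_numeral const_uminus power2_eq_square mult_ac)

lemma pbr_lin: "pbr (\<Sum>k\<in>UNIV. const (u k) * var k) (\<Sum>k\<in>UNIV. const (v k) * var k)
   = (\<Sum>k\<in>UNIV. \<Sum>l\<in>UNIV. const (u k * v l) * gbr k l)"
proof -
  have d: "pdiff i (\<Sum>k\<in>UNIV. const (u k) * var k) = const (u i)" for i u
    by (simp add: pdiff_sum pdiff_cmult pdiff_var if_distrib sum.delta cong: if_cong)
  show ?thesis unfolding pbr_def d by (simp add: const_mult)
qed

lemma phi_2: "phi A 2 = 2"
  by (simp add: phi_def subst_numeral)

lemma hom_var:
  fixes A :: "'k::comm_ring_1^3^3"
  shows "phi A (pbr (var i) (var j)) = pbr (phi A (var i)) (phi A (var j)) \<longleftrightarrow>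
   phi A (gbr i j) = (\<Sum>k\<in>UNIV. \<Sum>l\<in>UNIV. const (A $ i $ k * A $ j $ l) * gbr k l)"
proof -
  have e: "pdiff k (var i) * pdiff l (var j) * gbr k l = (if k = i then (if l = j then gbr i j else 0) else 0)" for k l
    by (simp add: pdiff_var)
  have "pbr (var i) (var j) = (gbr i j :: 'k P3)"
    unfolding pbr_def e by (cases i rule: cases3; cases j rule: cases3) (simp_all add: sum_3)
  then show ?thesis by (simp add: phi_var pbr_lin)
qed

lemma PAut_sup:
  fixes a b c d :: "'k::field"
  assumes "a \<noteq> 0" "b \<noteq> 0"
  shows "mat3 a 0 0 0 b 0 c d a \<in> PAut_gr"
proof -
  let ?A = "mat3 a 0 0 0 b 0 c d a"
  let ?B = "mat3 (1/a) 0 0 0 (1/b) 0 (-c/a^2) (-d/(a*b)) (1/a)"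
  have BA: "?B ** ?A = mat 1" and AB: "?A ** ?B = mat 1"
    using assms by (simp_all add: vec_eq_iff forall_3 matrix_matrix_mult_def sum_3 mat3_entries mat_def field_simps power2_eq_square)
  have "bij (phi ?A)"
  proof (rule o_bij)
    show "phi ?A \<circ> phi ?B = id" by (rule ext) (simp only: o_def phi_comp BA phi_id id_def)
    show "phi ?B \<circ> phi ?A = id" by (rule ext) (simp only: o_def phi_comp AB phi_id id_def)
  qed
  moreover have "phi ?A (pbr f g) = pbr (phi ?A f) (phi ?A g)" for f g
  proof (rule hom_gen)
    fix i j
    show "phi ?A (pbr (var i) (var j)) = pbr (phi ?A (var i)) (phi ?A (var j))"
      unfolding hom_var
      by (cases i rule: cases3; cases j rule: cases3)
        (simp_all add: sum_3 mat3_entries gbr_alt phi_add phi_mult phi_const phi_var phi_0 phi_2 phi_uminus const_mult const_numeral const_uminus algebra_simps)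
  qed
  ultimately show ?thesis by (simp add: PAut_gr_def)
qed



lemma dl_inj: "dl k = dl l \<longleftrightarrow> k = l"
proof
  assume "dl k = dl l"
  then have "Poly_Mapping.lookup (dl k) k = Poly_Mapping.lookup (dl l) k" by simp
  then show "k = l" by (simp add: lookup_single when_def split: if_splits)
qed simp

lemma dl_eq: "dl k + dl l = dl p + dl q \<longleftrightarrow> (k = p \<and> l = q) \<or> (k = q \<and> l = p)"
proof
  assume e: "dl k + dl l = dl p + dl q"
  then have "Poly_Mapping.lookup (dl k + dl l) k = Poly_Mapping.lookup (dl p + dl q) k" by simp
  then have "k = p \<or> k = q" by (auto simp: lookup_add lookup_single when_def split: if_splits)
  then show "(k = p \<and> l = q) \<or> (k = q \<and> l = p)"
  proof
    assume "k = p" then have "dl l = dl q" using e by simp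
    then show ?thesis using \<open>k = p\<close> dl_inj by blast
  next
    assume "k = q" then have "dl l = dl p" using e by (simp add: add.commute)
    then show ?thesis using \<open>k = q\<close> dl_inj by blast
  qed
next
  assume "(k = p \<and> l = q) \<or> (k = q \<and> l = p)"
  then show "dl k + dl l = dl p + dl q" by (metis add.commute)
qed

lemma lookup_cvv: "Poly_Mapping.lookup (const c * (var k * var l)) (dl p + dl q) = (if (k = p \<and> l = q) \<or> (k = q \<and> l = p) then c else 0)"
proof -
  have "const c * (var k * var l) = Poly_Mapping.single (dl k + dl l) c" by (simp add: const_def var_def mult_single)
  then show ?thesis by (simp only: lookup_single when_def dl_eq)
qed




definition g2 :: "3 \<Rightarrow> 3 \<Rightarrow> 'k::comm_ring_1" where
  "g2 i j = (if i = 2 \<and> j = 3 then 2 else if i = 3 \<and> j = 2 then -2 else 0)"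
definition g1 :: "3 \<Rightarrow> 3 \<Rightarrow> 'k::comm_ring_1" where
  "g1 i j = (if i = 3 \<and> j = 1 then 1 else if i = 1 \<and> j = 3 then -1 else 0)"

lemma lookup_gbr: "Poly_Mapping.lookup (const x * gbr k l) (dl p + dl q) =
   (if (1 = p \<and> 2 = q) \<or> (1 = q \<and> 2 = p) then x * g2 k l else 0) + (if 1 = p \<and> 1 = q then x * g1 k l else 0)"
proof -
  have "const x * gbr k l = const (x * g2 k l) * (var 1 * var 2) + const (x * g1 k l) * (var 1 * var 1)"
    unfolding gbr_alt g2_def g1_def by (simp add: const_mult algebra_simps)
  then show ?thesis by (simp only: lookup_add lookup_cvv) auto
qed

lemma L_mult: "(\<Sum>k\<in>UNIV. const (u k) * var k) * (\<Sum>l\<in>UNIV. const (v l) * var l)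
  = (\<Sum>k\<in>UNIV. \<Sum>l\<in>UNIV. const (u k * v l) * (var k * var l))"
  by (simp add: sum_product const_mult mult_ac)

lemma var_ne0: "(var i :: 'k::comm_ring_1 P3) \<noteq> 0"
proof
  assume a: "var i = (0 :: 'k P3)"
  have "Poly_Mapping.lookup (var i :: 'k P3) (dl i) = 1" by (simp add: var_def)
  then show False by (simp add: a)
qed

lemma PAut_sub:
  fixes A :: "'k::field_char_0 ^3^3"
  assumes "A \<in> PAut_gr"
  shows "\<exists>a b c d. A = mat3 a 0 0 0 b 0 c d a \<and> a \<noteq> 0 \<and> b \<noteq> 0"
proof -
  from assms have bij: "bij (phi A)" and hom: "\<And>f g. phi A (pbr f g) = pbr (phi A f) (phi A g)"
    by (auto simp: PAut_gr_def)
  have E: "phi A (gbr i j) = (\<Sum>k\<in>UNIV. \<Sum>l\<in>UNIV. const (A $ i $ k * A $ j $ l) * gbr k l)" for i j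
    using hom hom_var by blast
  have G31: "phi A (gbr 3 1) = (\<Sum>k\<in>UNIV. \<Sum>l\<in>UNIV. const (A $ 1 $ k * A $ 1 $ l) * (var k * var l))"
    by (simp add: gbr_def power2_eq_square phi_mult phi_var L_mult)
  have G23: "phi A (gbr 2 3) = (\<Sum>k\<in>UNIV. \<Sum>l\<in>UNIV. const (2 * A $ 1 $ k * A $ 2 $ l) * (var k * var l))"
  proof -
    have "phi A (gbr 2 3) = const 2 * (phi A (var 1) * phi A (var 2))"
      by (simp add: gbr_def phi_mult phi_2 const_numeral mult.assoc)
    then show ?thesis unfolding phi_var L_mult by (simp only: sum_distrib_left const_mult mult.assoc)
  qed
  have lk: "Poly_Mapping.lookup (\<Sum>k\<in>UNIV. \<Sum>l\<in>UNIV. const (w k l) * (var k * var l)) (dl p + dl q) =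
     Poly_Mapping.lookup (\<Sum>k\<in>UNIV. \<Sum>l\<in>UNIV. const (z k l) * gbr k l) (dl p + dl q)"
    if "(\<Sum>k\<in>UNIV. \<Sum>l\<in>UNIV. const (w k l) * (var k * var l)) = (\<Sum>k\<in>UNIV. \<Sum>l\<in>UNIV. const (z k l) * gbr k l)"
    for w z :: "3 \<Rightarrow> 3 \<Rightarrow> 'k" and p q
    using that by simp
  note E31 = lk[OF G31[symmetric, unfolded E]]
  note E23 = lk[OF G23[symmetric, unfolded E]]
  note ev = lookup_sum lookup_cvv lookup_gbr sum_3 g1_def g2_def
  have e1: "A $ 1 $ 2 * A $ 1 $ 2 = 0" using E31[of 2 2, unfolded lookup_sum lookup_cvv lookup_gbr] by (simp add: sum_3 g1_def g2_def)
  have e2: "A $ 1 $ 3 * A $ 1 $ 3 = 0" using E31[of 3 3, unfolded lookup_sum lookup_cvv lookup_gbr] by (simp add: sum_3 g1_def g2_def)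
  have e3: "A $ 1 $ 1 * A $ 1 $ 1 = A $ 3 $ 3 * A $ 1 $ 1 - A $ 3 $ 1 * A $ 1 $ 3" using E31[of 1 1, unfolded lookup_sum lookup_cvv lookup_gbr] by (simp add: sum_3 g1_def g2_def)
  have e4: "2 * A $ 1 $ 1 * A $ 2 $ 3 + 2 * A $ 1 $ 3 * A $ 2 $ 1 = 0" using E23[of 1 3, unfolded lookup_sum lookup_cvv lookup_gbr] by (simp add: sum_3 g1_def g2_def)
  have e5: "2 * A $ 1 $ 1 * A $ 2 $ 1 = A $ 2 $ 3 * A $ 3 $ 1 - A $ 2 $ 1 * A $ 3 $ 3" using E23[of 1 1, unfolded lookup_sum lookup_cvv lookup_gbr] by (simp add: sum_3 g1_def g2_def)
  have a12: "A $ 1 $ 2 = 0" and a13: "A $ 1 $ 3 = 0" using e1 e2 by simp_all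
  have L1: "phi A (var 1) = const (A $ 1 $ 1) * var 1"
    by (simp add: phi_var sum_3 a12 a13)
  have inj: "inj (phi A)" using bij by (rule bij_is_inj)
  have a11: "A $ 1 $ 1 \<noteq> 0"
  proof
    assume "A $ 1 $ 1 = 0"
    then have "phi A (var 1) = phi A 0" by (simp add: L1 phi_0)
    then have "var 1 = (0 :: 'k P3)" by (rule injD[OF inj])
    then show False using var_ne0 by blast
  qed
  have a23: "A $ 2 $ 3 = 0" using e4 a11 a13 by simp
  have a33: "A $ 3 $ 3 = A $ 1 $ 1" using e3 a11 a13
    by (metis diff_zero mult_cancel_right mult_zero_right)
  have "3 * A $ 1 $ 1 * A $ 2 $ 1 = 0" using e5 a23 a33 by (simp add: algebra_simps)
  then have a21: "A $ 2 $ 1 = 0" using a11 by simp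
  have a22: "A $ 2 $ 2 \<noteq> 0"
  proof
    assume "A $ 2 $ 2 = 0"
    then have "phi A (var 2) = phi A 0" by (simp add: phi_var sum_3 a21 a23 phi_0)
    then have "var 2 = (0 :: 'k P3)" by (rule injD[OF inj])
    then show False using var_ne0 by blast
  qed
  have "A = mat3 (A $ 1 $ 1) 0 0 0 (A $ 2 $ 2) 0 (A $ 3 $ 1) (A $ 3 $ 2) (A $ 1 $ 1)"
    by (simp add: vec_eq_iff forall_3 mat3_entries a12 a13 a21 a23 a33)
  then show ?thesis using a11 a22 by blast
qed



lemma charpoly_mat3: "charpoly3 (mat3 a 0 0 0 b 0 c d a :: 'k::comm_ring_1^3^3) = [:-a,1:]^2 * [:-b,1:]"
  unfolding charpoly3_def det_3 by (simp add: mat3_entries power2_eq_square algebra_simps)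

lemma cp_coeffs:
  fixes a b x :: "'k::comm_ring_1"
  shows "[:-a,1:]^2 * [:-b,1:] = [: -(a*a*b), a*a + 2*a*b, -(2*a+b), 1:]"
  by (simp add: power2_eq_square algebra_simps)

lemma solve_ab:
  fixes a b x :: "'k::field_char_0"
  assumes "[:-a,1:]^2 * [:-b,1:] = [:-1,1:]^2 * [:-x,1:]" "x \<noteq> 1"
  shows "a = 1 \<and> b = x"
proof -
  from assms(1) have h0: "a*a*b = x" and h1: "a*a + 2*a*b = 1 + 2*x" and h2: "2*a+b = 2+x"
    unfolding cp_coeffs by (simp_all add: algebra_simps)
  have "(a - 1) * (3*a - 1 - 2*x) = 0" using h1 h2 by algebra
  moreover have "3*a - 1 - 2*x \<noteq> 0"
  proof
    assume h3: "3*a - 1 - 2*x = 0"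
    have ea: "3*a = 1 + 2*x" using h3 by (simp add: algebra_simps)
    have eb: "3*b = 4 - x" using h2 ea by algebra
    have "27 * x = (3*a)*(3*a)*(3*b)" using h0 by (simp add: algebra_simps)
    also have "\<dots> = (1+2*x)*(1+2*x)*(4-x)" by (simp only: ea eb)
    finally have e: "27 * x = (1+2*x)*(1+2*x)*(4-x)" .
    have "- 4 * (x - 1)^3 = (1+2*x)*(1+2*x)*(4-x) - 27 * x" by algebra
    then have "- 4 * (x - 1)^3 = 0" using e by simp
    then show False using assms(2) by simp
  qed
  ultimately have "a = 1" by simp
  then show ?thesis using h2 by simp
qed



lemma lookup_cv: "Poly_Mapping.lookup (const x * var k) (dl p) = (if k = p then x else 0)"
proof -
  have "const x * var k = Poly_Mapping.single (dl k) x" by (simp add: const_def var_def mult_single)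
  then show ?thesis by (simp only: lookup_single when_def dl_inj)
qed

lemma powA: "phi (mat3 1 0 0 0 x 0 c d 1 :: 'k::comm_ring_1^3^3) ^^ n
   = phi (mat3 1 0 0 0 (x^n) 0 (of_nat n * c) (d * (\<Sum>j<n. x^j)) 1)"
proof (induction n)
  case 0
  have "mat3 1 0 0 0 (x^0) 0 (of_nat 0 * c) (d * (\<Sum>j<0. x^j)) 1 = (mat 1 :: 'k^3^3)"
    by (simp add: vec_eq_iff forall_3 mat3_entries mat_def)
  then show ?case by (simp add: phi_id fun_eq_iff)
next
  case (Suc n)
  have M: "(mat3 1 0 0 0 x 0 c d 1 :: 'k^3^3) ** mat3 1 0 0 0 (x^n) 0 (of_nat n * c) (d * (\<Sum>j<n. x^j)) 1
     = mat3 1 0 0 0 (x^Suc n) 0 (of_nat (Suc n) * c) (d * (\<Sum>j<Suc n. x^j)) 1"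
  proof -
    have e1: "c + of_nat n * c = (1 + of_nat n) * c" by (simp add: distrib_right)
    have e2: "d * x ^ n + d * sum ((^) x) {..<n} = d * (sum ((^) x) {..<n} + x ^ n)"
      by (simp only: distrib_left add.commute)
    show ?thesis
      by (simp add: vec_eq_iff forall_3 matrix_matrix_mult_def sum_3 mat3_entries e1 e2)
  qed
  show ?case
    by (rule ext) (simp only: funpow_Suc_right o_def Suc.IH phi_comp M)
qed

theorem lemma3p2p1:
  shows "(PAut_gr :: ('k::{alg_closed_field, field_char_0} ^3^3) set) =
           {mat3 a 0 0 0 b 0 c d a | a b c d. a \<noteq> 0 \<and> b \<noteq> 0}
       \<and> (PR :: ('k ^3^3) set) =
           {mat3 1 0 0 0 \<xi> 0 0 d 1 | \<xi> d. root_of_unity \<xi> \<and> \<xi> \<noteq> 1}"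
proof
  show P: "(PAut_gr :: ('k ^3^3) set) = {mat3 a 0 0 0 b 0 c d a | a b c d. a \<noteq> 0 \<and> b \<noteq> 0}"
  proof (intro set_eqI iffI)
    fix A :: "'k^3^3"
    assume "A \<in> PAut_gr"
    then obtain a b c d where "A = mat3 a 0 0 0 b 0 c d a" "a \<noteq> 0" "b \<noteq> 0"
      using PAut_sub by metis
    then show "A \<in> {mat3 a 0 0 0 b 0 c d a | a b c d. a \<noteq> 0 \<and> b \<noteq> 0}" by blast
  next
    fix A :: "'k^3^3"
    assume "A \<in> {mat3 a 0 0 0 b 0 c d a | a b c d. a \<noteq> 0 \<and> b \<noteq> 0}"
    then obtain a b c d where "A = mat3 a 0 0 0 b 0 c d a" "a \<noteq> 0" "b \<noteq> 0" by blast
    then show "A \<in> PAut_gr" using PAut_sup by simp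
  qed
  show "(PR :: ('k ^3^3) set) = {mat3 1 0 0 0 \<xi> 0 0 d 1 | \<xi> d. root_of_unity \<xi> \<and> \<xi> \<noteq> 1}"
  proof (intro set_eqI iffI)
    fix A :: "'k^3^3"
    assume "A \<in> PR"
    then have AP: "A \<in> PAut_gr" and fo: "\<exists>n>0. (phi A ^^ n) = id"
      and ex: "\<exists>\<xi>. root_of_unity \<xi> \<and> \<xi> \<noteq> 1 \<and> charpoly3 A = [:-1, 1:] ^ 2 * [:-\<xi>, 1:]"
      by (auto simp: PR_def)
    obtain a b c d where A: "A = mat3 a 0 0 0 b 0 c d a" using PAut_sub[OF AP] by blast
    obtain \<xi> where r: "root_of_unity \<xi>" "\<xi> \<noteq> 1" and cp: "charpoly3 A = [:-1, 1:] ^ 2 * [:-\<xi>, 1:]"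
      using ex by blast
    have ab: "a = 1 \<and> b = \<xi>" using solve_ab[OF cp[unfolded A charpoly_mat3] r(2)] .
    obtain n where n: "n > 0" "phi A ^^ n = id" using fo by blast
    have "phi (mat3 1 0 0 0 (\<xi>^n) 0 (of_nat n * c) (d * (\<Sum>j<n. \<xi>^j)) 1) (var 3) = (var 3 :: 'k P3)"
      using n(2) unfolding A ab[THEN conjunct1] ab[THEN conjunct2] powA by simp
    then have "Poly_Mapping.lookup (phi (mat3 1 0 0 0 (\<xi>^n) 0 (of_nat n * c) (d * (\<Sum>j<n. \<xi>^j)) 1) (var 3)) (dl 1)
       = Poly_Mapping.lookup (var 3 :: 'k P3) (dl 1)" by simp
    moreover have "Poly_Mapping.lookup (var 3 :: 'k P3) (dl 1) = 0"
      using lookup_cv[of "1::'k" 3 1] by simp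
    ultimately have "of_nat n * c = 0"
      unfolding phi_var sum_3 lookup_add lookup_cv mat3_entries by simp
    then have "c = 0" using n(1) by simp
    then show "A \<in> {mat3 1 0 0 0 \<xi> 0 0 d 1 | \<xi> d. root_of_unity \<xi> \<and> \<xi> \<noteq> 1}"
      using A ab r by blast
  next
    fix A :: "'k^3^3"
    assume "A \<in> {mat3 1 0 0 0 \<xi> 0 0 d 1 | \<xi> d. root_of_unity \<xi> \<and> \<xi> \<noteq> 1}"
    then obtain \<xi> d where A: "A = mat3 1 0 0 0 \<xi> 0 0 d 1" and r: "root_of_unity \<xi>" "\<xi> \<noteq> 1" by blast
    obtain n where n: "n > 0" "\<xi>^n = 1" using r(1) by (auto simp: root_of_unity_def)
    have x0: "\<xi> \<noteq> 0" using n by (metis power_0_left zero_neq_one less_not_refl2)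
    have AP: "A \<in> PAut_gr" unfolding A using PAut_sup[of 1 \<xi> 0 d] x0 by simp
    have "(\<xi> - 1) * (\<Sum>j<n. \<xi>^j) = 0" using power_diff_1_eq[of \<xi> n] n(2) by simp
    then have S: "(\<Sum>j<n. \<xi>^j) = 0" using r(2) by simp
    have "mat3 1 0 0 0 (\<xi>^n) 0 (of_nat n * 0) (d * (\<Sum>j<n. \<xi>^j)) 1 = (mat 1 :: 'k^3^3)"
      by (simp add: vec_eq_iff forall_3 mat3_entries mat_def n(2) S)
    then have "phi A ^^ n = id" unfolding A powA by (simp add: phi_id fun_eq_iff)
    moreover have "charpoly3 A = [:-1, 1:] ^ 2 * [:-\<xi>, 1:]"
      unfolding A charpoly_mat3 ..
    ultimately show "A \<in> PR" using AP n(1) r by (auto simp: PR_def)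
  qed
qed


end
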